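(* Let $\mathcal H$ be a standard $(1,1)$ diagram of a knot $K$ in a rational homology sphere $Y$, and let $\mathfrak s$ be a spin$^c$ structure of $Y$. Moving along $\tilde\beta_{\mathfrak s}$ in the direction of its orientation, suppose $b$ and $c$ are two turning points, in that order, with no turning point between them. Label the points of $\tilde\alpha\cap\tilde\beta_{\mathfrak s}$ from $b$ to $c$ along $\tilde\beta_{\mathfrak s}$ (including $b$ and $c$), in order, as $x_0=b,x_1,x_2,\dots$. Then, for the Maslov gradings of the corresponding elements of the basis $\mathfrak T(\mathcal H,\mathfrak s)$: $\operatorname{gr}(x_\ell)=\operatorname{gr}(b)$ if $\ell$ is even; $\operatorname{gr}(x_\ell)=\operatorname{gr}(b)+1$ if $\ell$ is odd and $b$ is a positive turning point; $\operatorname{gr}(x_\ell)=\operatorname{gr}(b)-1$ if $\ell$ is odd and $b$ is a negative turning point.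
   Context: $\mathcal H=(T^2,\alpha,\beta,w,z)$ is a doubly pointed genus one Heegaard diagram in standard form (every bigon cobounded by $\alpha$ and $\beta$ contains a basepoint), with $\alpha,\beta$ oriented and $\alpha\cdot\beta>0$. In the universal cover $\mathbb R^2$, with lifts of $\alpha$ the lines $\{y=k\}$ and $\tilde\alpha=\{y=0\}$ (oriented from $\alpha$), choose a point of $\alpha\cap\beta$ in spin$^c$ structure $\mathfrak s$ (via $\mathfrak s_w$), lift it to $\tilde\alpha$, and let $\tilde\beta_{\mathfrak s}$ be the lift of $\beta$ through it. The points of $\tilde\alpha\cap\tilde\beta_{\mathfrak s}$ correspond bijectively to $\mathfrak T(\mathcal H,\mathfrak s)=\{x\in\alpha\cap\beta:\mathfrak s_w(x)=\mathfrak s\}$; there are $2n+1$ of them, numbered $1,\dots,2n+1$ in the order of the orientation of $\tilde\alpha$. Following $\tilde\beta_{\mathfrak s}$ along its orientation gives a sequence of these points; each point (except the first and last) has a predecessor and a successor. A point is a turning point if its number is greater than both, or less than both, the numbers of its predecessor and successor. $\operatorname{CFK}^\infty(Y,K,\mathfrak s)$ is generated over $\mathbb F=\mathbb Z/2$ by $[x,i,j]$, $x\in\mathfrak T(\mathcal H,\mathfrak s)$, $j-i=A(x)$, with differential counting embedded bigons in $\mathbb R^2$ cobounded by lifts of $\alpha,\beta$: $\partial[x,i,j]=\sum[y,i-n_w(D),j-n_z(D)]$. The basis $\mathfrak T(\mathcal H,\mathfrak s)$ is obtained by choosing $[x,0,A(x)]$ for one $x$ and repeatedly adding, for each $y$ connected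 by a bigon to a chosen element, the unique $[y,i,j]$ appearing in the differential of, or having in its differential, that element. The Maslov grading $\operatorname{gr}$ is lowered by $1$ by $\partial$. For points $a,b$ of this basis, "$a\in\partial b$" means $\partial b$ has a nonzero $a$-component. A turning point $b$ with predecessor $a$ is positive if $a\in\partial b$ and negative if $b\in\partial a$. *)

theory Defs
  imports "HOL-Analysis.Analysis"
begin

text \<open>Universal cover of T^2 = R^2 / Z^2, with the lifts of alpha the horizontal
  lines {y = k}, alpha-tilde = {y = 0} oriented in the +x direction.
  A lift of beta is a curve c :: real => real * real (parameter increasing along
  the orientation of beta).\<close>

definition int_vec :: "real \<times> real \<Rightarrow> bool" where
  "int_vec u \<longleftrightarrow> fst u \<in> \<int> \<and> snd u \<in> \<int>"

definition alpha_pts :: "(real \<Rightarrow> real \<times> real) \<Rightarrow> real set" where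
  "alpha_pts c = {t. snd (c t) = 0}"

definition bigon_boundary :: "(real \<Rightarrow> real \<times> real) \<Rightarrow> real \<Rightarrow> real \<Rightarrow> (real \<times> real) set" where
  "bigon_boundary c s t = c ` closed_segment s t \<union> closed_segment (c s) (c t)"

text \<open>is_bigon c s t: there is an embedded bigon in R^2 from x = c s to y = c t
  (i.e. y appears in the differential of x): the two arcs meet only at x and y,
  the bigon (the inside of the Jordan curve) lies to the left of the alpha-arc
  traversed from x to y (so the induced boundary orientation runs along alpha
  from x to y and along beta from y to x), and both corners are convex
  (the beta-arc leaves each corner into the side of alpha where the bigon lies).\<close>
definition is_bigon :: "(real \<Rightarrow> real \<times> real) \<Rightarrow> real \<Rightarrow> real \<Rightarrow> bool" where
  "is_bigon c s t \<longleftrightarrow>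
     s \<in> alpha_pts c \<and> t \<in> alpha_pts c \<and> s \<noteq> t \<and>
     c ` closed_segment s t \<inter> closed_segment (c s) (c t) = {c s, c t} \<and>
     (let \<sigma> = sgn (fst (c t) - fst (c s)) in
       (\<forall>\<^sub>F e in at_right 0. midpoint (c s) (c t) + (0, \<sigma> * e) \<in> inside (bigon_boundary c s t)) \<and>
       (\<forall>\<^sub>F u in at s within open_segment s t. \<sigma> * snd (c u) > 0) \<and>
       (\<forall>\<^sub>F u in at t within open_segment s t. \<sigma> * snd (c u) > 0))"

definition pred_pt :: "(real \<Rightarrow> real \<times> real) \<Rightarrow> real \<Rightarrow> real" where
  "pred_pt c t = Max {s \<in> alpha_pts c. s < t}"

definition succ_pt :: "(real \<Rightarrow> real \<times> real) \<Rightarrow> real \<Rightarrow> real" where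
  "succ_pt c t = Min {s \<in> alpha_pts c. t < s}"

text \<open>Turning point: the numbering along alpha-tilde is the order of the
  x-coordinate.\<close>
definition turning :: "(real \<Rightarrow> real \<times> real) \<Rightarrow> real \<Rightarrow> bool" where
  "turning c t \<longleftrightarrow> t \<in> alpha_pts c \<and> (\<exists>s\<in>alpha_pts c. s < t) \<and> (\<exists>s\<in>alpha_pts c. t < s) \<and>
     (let a = fst (c (pred_pt c t)); b = fst (c t); n = fst (c (succ_pt c t)) in
        (a < b \<and> n < b) \<or> (b < a \<and> b < n))"

text \<open>Positive: predecessor a \<in> \<partial> b; negative: b \<in> \<partial> a.\<close>
definition positive_turning :: "(real \<Rightarrow> real \<times> real) \<Rightarrow> real \<Rightarrow> bool" where
  "positive_turning c t \<longleftrightarrow> turning c t \<and> is_bigon c t (pred_pt c t)"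

definition negative_turning :: "(real \<Rightarrow> real \<times> real) \<Rightarrow> real \<Rightarrow> bool" where
  "negative_turning c t \<longleftrightarrow> turning c t \<and> is_bigon c (pred_pt c t) t"

text \<open>A standard genus one doubly pointed Heegaard diagram (T^2, alpha, beta, w, z)
  with alpha . beta > 0, given through a lift gamma of beta (beta = gamma mod Z^2,
  gamma(t+1) = gamma t + (p,q), so alpha . beta = q) and lifts w, z of the basepoints.
  Standard form: every bigon embedded in T^2 contains a basepoint.\<close>
definition standard_diagram :: "(real \<Rightarrow> real \<times> real) \<Rightarrow> int \<Rightarrow> int \<Rightarrow> real \<times> real \<Rightarrow> real \<times> real \<Rightarrow> bool" where
  "standard_diagram \<gamma> p q w z \<longleftrightarrow>
     \<gamma> C1_differentiable_on UNIV \<and>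
     (\<forall>t. vector_derivative \<gamma> (at t) \<noteq> 0) \<and>
     (\<forall>t. \<gamma> (t + 1) = \<gamma> t + (of_int p, of_int q)) \<and>
     q > 0 \<and>
     (\<forall>s t. int_vec (\<gamma> s - \<gamma> t) \<longrightarrow> s - t \<in> \<int>) \<and>
     (\<forall>t. snd (\<gamma> t) \<in> \<int> \<longrightarrow> snd (vector_derivative \<gamma> (at t)) \<noteq> 0) \<and>
     snd w \<notin> \<int> \<and> snd z \<notin> \<int> \<and>
     (\<forall>t u. int_vec u \<longrightarrow> w \<noteq> \<gamma> t + u \<and> z \<noteq> \<gamma> t + u) \<and>
     \<not> int_vec (w - z) \<and>
     (\<forall>u s t. int_vec u \<longrightarrow> is_bigon (\<lambda>r. \<gamma> r + u) s t \<longrightarrow>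
        (let C = bigon_boundary (\<lambda>r. \<gamma> r + u) s t in
          (\<forall>a\<in>C \<union> inside C. \<forall>b\<in>C \<union> inside C. int_vec (a - b) \<longrightarrow> a = b) \<longrightarrow>
          (\<exists>m\<in>inside C. int_vec (m - w) \<or> int_vec (m - z))))"

end

theory Submission
  imports Defs
begin

lemma norm_0_pair: "norm ((0::real), y::real) = \<bar>y\<bar>"
  by (simp add: norm_Pair)

lemma bigon_inside:
  fixes c :: "real \<Rightarrow> real \<times> real" and s t \<epsilon> :: real
  assumes cont: "continuous_on UNIV c" and inj: "inj c" and st: "s < t"
    and cs: "snd (c s) = 0" and ct: "snd (c t) = 0"
    and eps: "\<epsilon> = 1 \<or> \<epsilon> = -1"
    and pos: "\<And>u. s < u \<Longrightarrow> u < t \<Longrightarrow> \<epsilon> * snd (c u) > 0"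
  shows "\<forall>\<^sub>F e in at_right 0. midpoint (c s) (c t) + (0, \<epsilon> * e) \<in> inside (bigon_boundary c s t)"
proof -
  define P Q where "P = c s" and "Q = c t"
  have PQ: "P \<noteq> Q" using inj st by (auto simp: P_def Q_def inj_eq)
  have eps2: "\<epsilon> * \<epsilon> = 1" "\<bar>\<epsilon>\<bar> = 1" using eps by auto
  define g1 where "g1 = (\<lambda>x. c (s + x * (t - s)))"
  define g where "g = g1 +++ linepath Q P"
  have pg1: "path g1"
    unfolding path_def g1_def
    by (intro continuous_on_compose2[OF cont] continuous_intros) auto
  have "inj_on g1 {0..1}"
    unfolding g1_def inj_on_def using st by (auto simp: inj_eq[OF inj])
  then have arc1: "arc g1" using pg1 by (simp add: arc_def)
  have img1: "path_image g1 = c ` {s..t}"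
  proof
    show "path_image g1 \<subseteq> c ` {s..t}"
      unfolding path_image_def g1_def using st
      by (auto intro!: imageI simp: mult_le_cancel_right1 add_increasing2 mult_nonneg_nonneg)
         (smt (verit, best) mult_left_le_one_le)
  next
    show "c ` {s..t} \<subseteq> path_image g1"
    proof
      fix y assume "y \<in> c ` {s..t}"
      then obtain u where u: "u \<in> {s..t}" "y = c u" by auto
      have "(u - s) / (t - s) \<in> {0..1}" using u st by (auto simp: divide_simps)
      moreover have "g1 ((u - s) / (t - s)) = y" using st u by (simp add: g1_def)
      ultimately show "y \<in> path_image g1" unfolding path_image_def by (metis imageI)
    qed
  qed
  have segsnd: "snd y = 0" if "y \<in> closed_segment P Q" for y
    using that cs ct unfolding closed_segment_def P_def Q_def by auto
  have arczero: "u = s \<or> u = t" if "u \<in> {s..t}" "snd (c u) = 0" for u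
    using pos[of u] that by force
  have arcnn: "\<epsilon> * snd (c u) \<ge> 0" if "u \<in> {s..t}" for u
    using pos[of u] that cs ct by (cases "u = s \<or> u = t") force+
  have int: "path_image g1 \<inter> path_image (linepath Q P) \<subseteq> {pathstart g1, pathstart (linepath Q P)}"
  proof
    fix y assume y: "y \<in> path_image g1 \<inter> path_image (linepath Q P)"
    then have "snd y = 0" using segsnd by (auto simp: closed_segment_commute)
    moreover obtain u where "u \<in> {s..t}" "y = c u" using y img1 by auto
    ultimately have "y = P \<or> y = Q" using arczero P_def Q_def by auto
    then show "y \<in> {pathstart g1, pathstart (linepath Q P)}"
      by (auto simp: pathstart_def g1_def P_def linepath_def)
  qed
  have simple: "simple_path g" unfolding g_def
    by (rule simple_path_join_loop[OF arc1 arc_linepath[OF PQ[symmetric]] _ _ int])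
       (auto simp: pathfinish_def pathstart_def g1_def P_def Q_def linepath_def)
  have loop: "pathfinish g = pathstart g"
    by (simp add: g_def pathfinish_def pathstart_def g1_def P_def joinpaths_def linepath_def)
  define J where "J = bigon_boundary c s t"
  have pf: "pathfinish g1 = pathstart (linepath Q P)" by (simp add: pathfinish_def g1_def Q_def)
  have J: "J = path_image g"
    unfolding J_def g_def bigon_boundary_def using st
    using pf by (simp add: path_image_join img1 closed_segment_eq_real_ivl closed_segment_commute P_def Q_def)
  have "path_image g homeomorphic sphere (0::complex) 1"
    by (rule homeomorphic_simple_path_image_circle[OF simple loop]) simp
  moreover have "sphere (0::complex) 1 homeomorphic sphere (0::real\<times>real) 1"
    by (rule homeomorphic_spheres_gen) auto
  ultimately have hom: "J homeomorphic sphere (0::real\<times>real) 1"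
    unfolding J by (rule homeomorphic_trans)
  have bJ: "bounded J" unfolding J
    by (simp add: bounded_simple_path_image simple)
  have cJ: "closed J" unfolding J
    by (simp add: closed_simple_path_image simple)
  have nc: "\<not> connected (- J)"
    using Jordan_Brouwer_separation[OF hom] by simp
  have co: "connected (outside J)" using connected_outside[OF bJ] by simp
  have "inside J \<noteq> {}"
  proof
    assume "inside J = {}"
    then have "outside J = - J" using inside_Un_outside[of J] by simp
    then show False using co nc by simp
  qed
  then obtain x0 where x0: "x0 \<in> inside J" by auto
  define T where "T = connected_component_set (- J) x0"
  have x0J: "x0 \<in> - J" using x0 inside_no_overlap[of J] by blast
  have Tc: "T \<in> components (- J)" unfolding T_def using x0J components_iff by blast
  have fT: "frontier T = J" by (rule Jordan_Brouwer_frontier[OF hom Tc]) simp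
  have TI: "T \<subseteq> inside J"
    unfolding T_def using x0 inside_same_component by blast
  define m where "m = midpoint P Q"
  have mJ: "m \<in> J" unfolding J_def bigon_boundary_def m_def P_def Q_def
    by (simp add: midpoint_in_closed_segment)
  have msnd: "snd m = 0" unfolding m_def midpoint_def using cs ct P_def Q_def by simp
  have marc: "m \<notin> c ` {s..t}"
  proof
    assume "m \<in> c ` {s..t}"
    then obtain u where "u \<in> {s..t}" "m = c u" by auto
    then have "m = P \<or> m = Q" using arczero msnd P_def Q_def by auto
    then show False using PQ unfolding m_def by auto
  qed
  have "compact (c ` {s..t})"
    by (rule compact_continuous_image[OF continuous_on_subset[OF cont]]) auto
  then obtain \<delta> where \<delta>: "\<delta> > 0" "\<And>x. x \<in> c ` {s..t} \<Longrightarrow> \<delta> \<le> dist m x"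
    using separate_point_closed[OF compact_imp_closed marc] by blast
  define U where "U = {y. dist m y < \<delta> \<and> \<epsilon> * snd y > 0}"
  define L where "L = {y::real\<times>real. \<epsilon> * snd y < 0}"
  have JS: "J = c ` {s..t} \<union> closed_segment P Q"
    unfolding J_def bigon_boundary_def P_def Q_def using st by (simp add: closed_segment_eq_real_ivl)
  have UJ: "U \<subseteq> - J"
  proof
    fix y assume y: "y \<in> U"
    then have "dist m y < \<delta>" unfolding U_def by simp
    then have "y \<notin> c ` {s..t}" using \<delta>(2)[of y] by linarith
    moreover have "snd y \<noteq> 0" using y unfolding U_def by auto
    then have "y \<notin> closed_segment P Q" using segsnd by blast
    ultimately show "y \<in> - J" using JS by auto
  qed
  have LJ: "L \<subseteq> - J"
  proof
    fix y assume y: "y \<in> L"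
    then have ly: "\<epsilon> * snd y < 0" unfolding L_def by simp
    then have "y \<notin> c ` {s..t}" using arcnn by (metis image_iff not_le)
    moreover have "snd y \<noteq> 0" using ly by auto
    then have "y \<notin> closed_segment P Q" using segsnd by blast
    ultimately show "y \<in> - J" using JS by auto
  qed
  have convU: "convex U"
  proof -
    have "U = ball m \<delta> \<inter> {y. \<epsilon> * snd y > 0}" unfolding U_def by auto
    moreover have "{y::real\<times>real. \<epsilon> * snd y > 0} = {y. inner (0, \<epsilon>) y > 0}"
      by (auto simp: inner_Pair_0)
    then have "convex {y::real\<times>real. \<epsilon> * snd y > 0}" using convex_halfspace_gt by simp
    ultimately show ?thesis by (simp add: convex_Int)
  qed
  have "L = {y. inner (0, \<epsilon>) y < 0}" unfolding L_def
    by (auto simp: inner_Pair_0)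
  then have convL: "convex L" using convex_halfspace_lt by simp
  have unbL: "\<not> bounded L"
  proof
    assume "bounded L"
    then obtain B where B: "\<And>x. x \<in> L \<Longrightarrow> norm x \<le> B" by (auto simp: bounded_iff)
    have "(0, - \<epsilon> * (\<bar>B\<bar> + 1)) \<in> L" unfolding L_def using eps by auto
    from B[OF this] show False using eps2 by (simp add: norm_0_pair abs_mult)
  qed
  have Lout: "L \<subseteq> outside J"
  proof
    fix y assume y: "y \<in> L"
    have "L \<subseteq> connected_component_set (- J) y"
      by (rule connected_component_maximal[OF y convex_connected[OF convL] LJ])
    then have "\<not> bounded (connected_component_set (- J) y)" using unbL bounded_subset by blast
    then show "y \<in> outside J" by (simp add: outside)
  qed
  have "m \<in> closure T" using fT mJ unfolding frontier_def by blast
  then obtain y where y: "y \<in> T" "dist y m < \<delta> / 2"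
    using \<delta>(1) closure_approachable[of m T] by (meson half_gt_zero)
  have yI: "y \<in> inside J" using y TI by auto
  then have "y \<notin> L" using Lout inside_Int_outside by blast
  then have ysnd: "\<epsilon> * snd y \<ge> 0" unfolding L_def by simp
  have "open (inside J)" using cJ by (simp add: open_inside)
  then obtain r where r: "r > 0" "ball y r \<subseteq> inside J" using yI open_contains_ball by blast
  define k where "k = min r (\<delta>/2) / 2"
  have k: "k > 0" "k < r" "k < \<delta>/2" using r \<delta> unfolding k_def by auto
  define y' where "y' = y + (0, \<epsilon> * k)"
  have dyy: "dist y y' = k" unfolding y'_def dist_norm using eps2 k by (simp add: norm_0_pair abs_mult)
  have "y' \<in> inside J" using r dyy k by auto
  moreover have "y' \<in> U"
  proof -
    have "dist m y' \<le> dist m y + dist y y'" by (rule dist_triangle)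
    then have "dist m y' < \<delta>" using y dyy k by (simp add: dist_commute)
    moreover have "\<epsilon> * snd y' > 0" unfolding y'_def using ysnd eps2 k
      by (simp add: distrib_left mult.assoc[symmetric])
    ultimately show ?thesis unfolding U_def by simp
  qed
  ultimately have UI: "U \<subseteq> inside J"
    using connected_component_maximal[OF _ convex_connected[OF convU] UJ]
      inside_same_component by blast
  show ?thesis
    unfolding eventually_at_right[OF zero_less_one[where 'a=real], symmetric]
  proof (subst eventually_at_right[of 0 \<delta>])
    show "0 < \<delta>" by fact
    show "\<exists>b>0. \<forall>e>0. e < b \<longrightarrow> midpoint (c s) (c t) + (0, \<epsilon> * e) \<in> inside (bigon_boundary c s t)"
    proof (intro exI[of _ \<delta>] conjI allI impI)
      fix e :: real assume e: "0 < e" "e < \<delta>"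
      have "midpoint (c s) (c t) + (0, \<epsilon> * e) \<in> U"
        unfolding U_def using e eps2 msnd
        by (simp add: m_def P_def Q_def dist_norm norm_0_pair abs_mult mult.assoc[symmetric])
      then show "midpoint (c s) (c t) + (0, \<epsilon> * e) \<in> inside (bigon_boundary c s t)"
        using UI J_def by auto
    qed (rule \<delta>)
  qed
qed

lemma is_bigon_pos:
  fixes c :: "real \<Rightarrow> real \<times> real" and s t \<epsilon> :: real
  assumes cont: "continuous_on UNIV c" and inj: "inj c" and st: "s < t"
    and cs: "snd (c s) = 0" and ct: "snd (c t) = 0"
    and eps: "\<epsilon> = 1 \<or> \<epsilon> = -1"
    and pos: "\<And>u. s < u \<Longrightarrow> u < t \<Longrightarrow> \<epsilon> * snd (c u) > 0"
    and sig: "sgn (fst (c t) - fst (c s)) = \<epsilon>"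
  shows "is_bigon c s t"
proof -
  have ev: "\<forall>\<^sub>F e in at_right 0. midpoint (c s) (c t) + (0, \<epsilon> * e) \<in> inside (bigon_boundary c s t)"
    by (rule bigon_inside[OF cont inj st cs ct eps pos])
  have int: "c ` closed_segment s t \<inter> closed_segment (c s) (c t) = {c s, c t}"
  proof
    show "c ` closed_segment s t \<inter> closed_segment (c s) (c t) \<subseteq> {c s, c t}"
    proof
      fix y assume y: "y \<in> c ` closed_segment s t \<inter> closed_segment (c s) (c t)"
      then have "snd y = 0" using cs ct unfolding closed_segment_def by auto
      moreover obtain u where "u \<in> {s..t}" "y = c u" using y st by (auto simp: closed_segment_eq_real_ivl)
      ultimately show "y \<in> {c s, c t}" using pos[of u] by (cases "u = s \<or> u = t") auto
    qed
  qed (auto simp: closed_segment_eq_real_ivl st less_imp_le)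
  have c1: "\<forall>\<^sub>F u in at s within open_segment s t. \<epsilon> * snd (c u) > 0"
    unfolding eventually_at using st pos by (intro exI[of _ 1]) (auto simp: open_segment_eq_real_ivl)
  have c2: "\<forall>\<^sub>F u in at t within open_segment s t. \<epsilon> * snd (c u) > 0"
    unfolding eventually_at using st pos by (intro exI[of _ 1]) (auto simp: open_segment_eq_real_ivl)
  show ?thesis unfolding is_bigon_def Let_def sig alpha_pts_def
    using cs ct st ev int c1 c2 by auto
qed

lemma is_bigon_neg:
  fixes c :: "real \<Rightarrow> real \<times> real" and s t \<epsilon> :: real
  assumes cont: "continuous_on UNIV c" and inj: "inj c" and st: "s < t"
    and cs: "snd (c s) = 0" and ct: "snd (c t) = 0"
    and eps: "\<epsilon> = 1 \<or> \<epsilon> = -1"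
    and pos: "\<And>u. s < u \<Longrightarrow> u < t \<Longrightarrow> \<epsilon> * snd (c u) > 0"
    and sig: "sgn (fst (c s) - fst (c t)) = \<epsilon>"
  shows "is_bigon c t s"
proof -
  have ev: "\<forall>\<^sub>F e in at_right 0. midpoint (c s) (c t) + (0, \<epsilon> * e) \<in> inside (bigon_boundary c s t)"
    by (rule bigon_inside[OF cont inj st cs ct eps pos])
  have bb: "bigon_boundary c t s = bigon_boundary c s t"
    unfolding bigon_boundary_def by (simp add: closed_segment_commute)
  have int: "c ` closed_segment s t \<inter> closed_segment (c s) (c t) = {c s, c t}"
  proof
    show "c ` closed_segment s t \<inter> closed_segment (c s) (c t) \<subseteq> {c s, c t}"
    proof
      fix y assume y: "y \<in> c ` closed_segment s t \<inter> closed_segment (c s) (c t)"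
      then have "snd y = 0" using cs ct unfolding closed_segment_def by auto
      moreover obtain u where "u \<in> {s..t}" "y = c u" using y st by (auto simp: closed_segment_eq_real_ivl)
      ultimately show "y \<in> {c s, c t}" using pos[of u] by (cases "u = s \<or> u = t") auto
    qed
  qed (auto simp: closed_segment_eq_real_ivl st less_imp_le)
  have c1: "\<forall>\<^sub>F u in at s within open_segment s t. \<epsilon> * snd (c u) > 0"
    unfolding eventually_at using st pos by (intro exI[of _ 1]) (auto simp: open_segment_eq_real_ivl)
  have c2: "\<forall>\<^sub>F u in at t within open_segment s t. \<epsilon> * snd (c u) > 0"
    unfolding eventually_at using st pos by (intro exI[of _ 1]) (auto simp: open_segment_eq_real_ivl)
  show ?thesis unfolding is_bigon_def Let_def sig alpha_pts_def bb midpoint_sym[of "c t"]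
      closed_segment_commute[of t] closed_segment_commute[of "c t"] open_segment_commute[of t]
    using cs ct st ev int c1 c2 by (auto simp: Int_commute insert_commute)
qed

definition sg :: "(real \<Rightarrow> real \<times> real) \<Rightarrow> real \<Rightarrow> real \<Rightarrow> real" where
  "sg f s t = sgn (snd (f ((s + t) / 2)))"

definition consec :: "(real \<Rightarrow> real \<times> real) \<Rightarrow> real \<Rightarrow> real \<Rightarrow> bool" where
  "consec f s t \<longleftrightarrow> s \<in> alpha_pts f \<and> t \<in> alpha_pts f \<and> s < t \<and> (\<forall>u\<in>alpha_pts f. \<not> (s < u \<and> u < t))"

lemma sign_arc:
  assumes cont: "continuous_on UNIV f" and cs: "consec f s t"
  shows "(sg f s t = 1 \<or> sg f s t = -1) \<and> (\<forall>u. s < u \<and> u < t \<longrightarrow> sg f s t * snd (f u) > 0)"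
proof -
  define m where "m = (s + t) / 2"
  have st: "s < t" and noA: "\<And>u. s < u \<Longrightarrow> u < t \<Longrightarrow> snd (f u) \<noteq> 0"
    using cs unfolding consec_def alpha_pts_def by auto
  have m: "s < m" "m < t" using st unfolding m_def by auto
  have nz: "snd (f m) \<noteq> 0" using noA m by auto
  define e where "e = sg f s t"
  have e: "e = sgn (snd (f m))" unfolding e_def sg_def m_def by simp
  have e1: "e = 1 \<or> e = -1" using nz e by (auto simp: sgn_real_def)
  have hm: "e * snd (f m) > 0" using nz e by (auto simp: sgn_real_def)
  define h where "h = (\<lambda>r. e * snd (f r))"
  have hc: "continuous_on UNIV h" unfolding h_def
    by (intro continuous_intros continuous_on_compose2[OF cont]) auto
  have "e * snd (f u) > 0" if u: "s < u" "u < t" for u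
  proof (rule ccontr)
    assume "\<not> e * snd (f u) > 0"
    then have hu: "h u \<le> 0" unfolding h_def by simp
    have "\<exists>x. min u m \<le> x \<and> x \<le> max u m \<and> h x = 0"
    proof (cases "u \<le> m")
      case True
      then show ?thesis using IVT'[of h u 0 m] hu hm continuous_on_subset[OF hc]
        unfolding h_def by force
    next
      case False
      then show ?thesis using IVT2'[of h u 0 m] hu hm continuous_on_subset[OF hc]
        unfolding h_def by force
    qed
    then obtain x where x: "min u m \<le> x" "x \<le> max u m" "h x = 0" by blast
    have "s < x" "x < t" using x(1,2) u m by auto
    then show False using noA[of x] x(3) e1 unfolding h_def by auto
  qed
  then show ?thesis using e1 unfolding e_def by auto
qed

lemma pred_props:
  assumes fin: "finite (alpha_pts f)" and t: "t \<in> alpha_pts f" and s: "s \<in> alpha_pts f" "s < t"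
  shows "consec f (pred_pt f t) t \<and> s \<le> pred_pt f t"
proof -
  let ?S = "{s \<in> alpha_pts f. s < t}"
  have fS: "finite ?S" using fin by auto
  have ne: "?S \<noteq> {}" using s by auto
  have "pred_pt f t \<in> ?S" unfolding pred_pt_def using Max_in[OF fS ne] .
  moreover have "\<And>u. u \<in> ?S \<Longrightarrow> u \<le> pred_pt f t" unfolding pred_pt_def using Max_ge[OF fS] by blast
  ultimately show ?thesis unfolding consec_def using t s by force
qed

lemma succ_props:
  assumes fin: "finite (alpha_pts f)" and s: "s \<in> alpha_pts f" and t: "t \<in> alpha_pts f" "s < t"
  shows "consec f s (succ_pt f s) \<and> succ_pt f s \<le> t"
proof -
  let ?S = "{t \<in> alpha_pts f. s < t}"
  have fS: "finite ?S" using fin by auto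
  have ne: "?S \<noteq> {}" using t by auto
  have "succ_pt f s \<in> ?S" unfolding succ_pt_def using Min_in[OF fS ne] .
  moreover have "\<And>u. u \<in> ?S \<Longrightarrow> succ_pt f s \<le> u" unfolding succ_pt_def using Min_le[OF fS] by blast
  ultimately show ?thesis unfolding consec_def using t s by force
qed

lemma consec_pred_succ:
  assumes fin: "finite (alpha_pts f)" and cs: "consec f s t"
  shows "pred_pt f t = s" "succ_pt f s = t"
proof -
  have s: "s \<in> alpha_pts f" and t: "t \<in> alpha_pts f" and st: "s < t"
    using cs unfolding consec_def by auto
  have "consec f (pred_pt f t) t" "s \<le> pred_pt f t" using pred_props[OF fin t s st] by auto
  then show "pred_pt f t = s" using cs unfolding consec_def by force
  have "consec f s (succ_pt f s)" "succ_pt f s \<le> t" using succ_props[OF fin s t st] by auto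
  then show "succ_pt f s = t" using cs unfolding consec_def by force
qed

lemma alternation:
  assumes cont: "continuous_on UNIV f"
    and der: "((\<lambda>r. snd (f r)) has_real_derivative D) (at s)" and D: "D \<noteq> 0"
    and c1: "consec f a s" and c2: "consec f s b"
  shows "sg f a s = - sg f s b"
proof -
  have as: "a < s" and sb: "s < b" and s0: "snd (f s) = 0"
    using c1 c2 unfolding consec_def alpha_pts_def by auto
  have A1: "sg f a s = 1 \<or> sg f a s = -1" "\<And>u. a < u \<Longrightarrow> u < s \<Longrightarrow> sg f a s * snd (f u) > 0"
    using sign_arc[OF cont c1] by auto
  have A2: "sg f s b = 1 \<or> sg f s b = -1" "\<And>u. s < u \<Longrightarrow> u < b \<Longrightarrow> sg f s b * snd (f u) > 0"
    using sign_arc[OF cont c2] by auto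
  show ?thesis
  proof (cases "D > 0")
    case True
    obtain d1 where d1: "d1 > 0" "\<And>h. h > 0 \<Longrightarrow> h < d1 \<Longrightarrow> snd (f s) < snd (f (s + h))"
      using DERIV_pos_inc_right[OF der True] by blast
    obtain d2 where d2: "d2 > 0" "\<And>h. h > 0 \<Longrightarrow> h < d2 \<Longrightarrow> snd (f (s - h)) < snd (f s)"
      using DERIV_pos_inc_left[OF der True] by blast
    define h where "h = min (min d1 d2) (min (s - a) (b - s)) / 2"
    have h: "h > 0" "h < d1" "h < d2" "h < s - a" "h < b - s" using d1 d2 as sb unfolding h_def by auto
    have p1: "snd (f (s + h)) > 0" using d1(2)[OF h(1,2)] s0 by simp
    have p2: "snd (f (s - h)) < 0" using d2(2)[OF h(1,3)] s0 by simp
    have "sg f s b * snd (f (s + h)) > 0" using A2(2)[of "s + h"] h by auto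
    then have "sg f s b = 1" using A2(1) p1 by (auto simp: mult_less_0_iff)
    moreover have "sg f a s * snd (f (s - h)) > 0" using A1(2)[of "s - h"] h by auto
    then have "sg f a s = -1" using A1(1) p2 by auto
    ultimately show ?thesis by simp
  next
    case False
    then have Dn: "D < 0" using D by simp
    obtain d1 where d1: "d1 > 0" "\<And>h. h > 0 \<Longrightarrow> h < d1 \<Longrightarrow> snd (f (s + h)) < snd (f s)"
      using DERIV_neg_dec_right[OF der Dn] by blast
    obtain d2 where d2: "d2 > 0" "\<And>h. h > 0 \<Longrightarrow> h < d2 \<Longrightarrow> snd (f s) < snd (f (s - h))"
      using DERIV_neg_dec_left[OF der Dn] by blast
    define h where "h = min (min d1 d2) (min (s - a) (b - s)) / 2"
    have h: "h > 0" "h < d1" "h < d2" "h < s - a" "h < b - s" using d1 d2 as sb unfolding h_def by auto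
    have p1: "snd (f (s + h)) < 0" using d1(2)[OF h(1,2)] s0 by simp
    have p2: "snd (f (s - h)) > 0" using d2(2)[OF h(1,3)] s0 by simp
    have "sg f s b * snd (f (s + h)) > 0" using A2(2)[of "s + h"] h by auto
    then have "sg f s b = -1" using A2(1) p1 by auto
    moreover have "sg f a s * snd (f (s - h)) > 0" using A1(2)[of "s - h"] h by auto
    then have "sg f a s = 1" using A1(1) p2 by (auto simp: mult_less_0_iff)
    ultimately show ?thesis by simp
  qed
qed

lemma X_distinct:
  assumes inj: "inj f" and s: "s \<in> alpha_pts f" and t: "t \<in> alpha_pts f" and st: "s \<noteq> t"
  shows "fst (f s) \<noteq> fst (f t)"
proof
  assume "fst (f s) = fst (f t)"
  then have "f s = f t" using s t unfolding alpha_pts_def by (simp add: prod_eq_iff)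
  then show False using inj st by (simp add: inj_eq)
qed

lemma bigon_step:
  fixes gr :: "real \<Rightarrow> int"
  assumes cont: "continuous_on UNIV f" and inj: "inj f" and cs: "consec f s t"
    and H: "\<forall>s t. is_bigon f s t \<longrightarrow> gr s = gr t + 1"
  shows "(sgn (fst (f t) - fst (f s)) = sg f s t \<longrightarrow> gr t = gr s - 1) \<and>
         (sgn (fst (f t) - fst (f s)) = - sg f s t \<longrightarrow> gr t = gr s + 1)"
proof -
  have st: "s < t" and s0: "snd (f s) = 0" and t0: "snd (f t) = 0"
    using cs unfolding consec_def alpha_pts_def by auto
  have A: "sg f s t = 1 \<or> sg f s t = -1" "\<And>u. s < u \<Longrightarrow> u < t \<Longrightarrow> sg f s t * snd (f u) > 0"
    using sign_arc[OF cont cs] by auto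
  have "sgn (fst (f t) - fst (f s)) = sg f s t \<longrightarrow> gr t = gr s - 1"
  proof
    assume "sgn (fst (f t) - fst (f s)) = sg f s t"
    then have "is_bigon f s t" using is_bigon_pos[OF cont inj st s0 t0 A(1)] A(2) by blast
    then show "gr t = gr s - 1" using H by force
  qed
  moreover have "sgn (fst (f t) - fst (f s)) = - sg f s t \<longrightarrow> gr t = gr s + 1"
  proof
    assume "sgn (fst (f t) - fst (f s)) = - sg f s t"
    then have "sgn (fst (f s) - fst (f t)) = sg f s t"
      by (metis minus_diff_eq sgn_minus verit_minus_simplify(4))
    then have "is_bigon f t s" using is_bigon_neg[OF cont inj st s0 t0 A(1)] A(2) by blast
    then show "gr t = gr s + 1" using H by force
  qed
  ultimately show ?thesis by blast
qed

lemma corner: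
  assumes cs: "consec f a b"
    and ev: "\<forall>\<^sub>F u in at b within open_segment a b. \<sigma> * snd (f u) > 0"
    and e: "e = 1 \<or> e = -1" and pos: "\<And>u. a < u \<Longrightarrow> u < b \<Longrightarrow> e * snd (f u) > 0"
    and \<sigma>: "\<sigma> = 1 \<or> \<sigma> = -1"
  shows "\<sigma> = e"
proof -
  have ab: "a < b" using cs unfolding consec_def by auto
  obtain d where d: "d > 0" "\<And>x. x \<in> open_segment a b \<Longrightarrow> x \<noteq> b \<Longrightarrow> dist x b < d \<Longrightarrow> \<sigma> * snd (f x) > 0"
    using ev unfolding eventually_at by blast
  define u where "u = b - min d (b - a) / 2"
  have m: "0 < min d (b - a)" "min d (b - a) \<le> d" "min d (b - a) \<le> b - a" using ab d(1) by auto
  have u1: "a < u" unfolding u_def using m by (smt (verit) field_sum_of_halves)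
  have u2: "u < b" unfolding u_def using m by (smt (verit) field_sum_of_halves)
  have "dist u b = min d (b - a) / 2" unfolding u_def dist_real_def using m by simp
  then have u3: "dist u b < d" using m by (smt (verit) field_sum_of_halves)
  note u = u1 u2 u3
  have "\<sigma> * snd (f u) > 0" using d(2)[of u] u by (auto simp: open_segment_eq_real_ivl)
  moreover have "e * snd (f u) > 0" using pos u by auto
  ultimately show ?thesis using e \<sigma> by (auto simp: mult_less_0_iff)
qed

lemma sgn_pm1: "(x::real) \<noteq> 0 \<Longrightarrow> sgn x = 1 \<or> sgn x = -1"
  by (auto simp: sgn_real_def)

lemma main_comb:
  fixes f :: "real \<Rightarrow> real \<times> real" and gr :: "real \<Rightarrow> int" and b c :: real
  assumes cont: "continuous_on UNIV f" and inj: "inj f" and fin: "finite (alpha_pts f)"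
    and der: "\<And>t. t \<in> alpha_pts f \<Longrightarrow> \<exists>D. D \<noteq> 0 \<and> ((\<lambda>r. snd (f r)) has_real_derivative D) (at t)"
    and H: "\<forall>s t. is_bigon f s t \<longrightarrow> gr s = gr t + 1"
    and tb: "turning f b" and tc: "turning f c" and bc: "b < c"
    and nt: "\<forall>t\<in>alpha_pts f. b < t \<and> t < c \<longrightarrow> \<not> turning f t"
  shows "\<forall>t\<in>alpha_pts f. b \<le> t \<and> t \<le> c \<longrightarrow>
    (let l = card {s \<in> alpha_pts f. b \<le> s \<and> s < t} in
      (even l \<longrightarrow> gr t = gr b) \<and>
      (odd l \<and> positive_turning f b \<longrightarrow> gr t = gr b + 1) \<and>
      (odd l \<and> negative_turning f b \<longrightarrow> gr t = gr b - 1))"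
proof -
  let ?A = "alpha_pts f"
  define X where "X = (\<lambda>r. fst (f r))"
  define l where "l = (\<lambda>t. card {s \<in> ?A. b \<le> s \<and> s < t})"
  have bA: "b \<in> ?A" and cA: "c \<in> ?A" using tb tc by (auto simp: turning_def)
  define b1 where "b1 = succ_pt f b"
  have cb1: "consec f b b1" "b1 \<le> c" using succ_props[OF fin bA cA bc] b1_def by auto
  have b1A: "b1 \<in> ?A" "b < b1" using cb1 unfolding consec_def by auto
  define \<delta> where "\<delta> = sgn (X b1 - X b)"
  define e0 where "e0 = sg f b b1"
  have e0: "e0 = 1 \<or> e0 = -1" using sign_arc[OF cont cb1(1)] e0_def by auto
  have \<delta>1: "\<delta> = 1 \<or> \<delta> = -1" unfolding \<delta>_def X_def
    using X_distinct[OF inj b1A(1) bA] b1A(2) sgn_pm1 by auto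
  have "{s \<in> ?A. b \<le> s \<and> s < b} = {}" by auto
  then have lb: "l b = 0" unfolding l_def by (metis card.empty)
  have inv: "\<forall>t\<in>?A. b \<le> t \<and> t \<le> c \<and> l t = n \<longrightarrow>
      (even n \<longrightarrow> gr t = gr b) \<and>
      (odd n \<longrightarrow> gr t = (if \<delta> = e0 then gr b - 1 else gr b + 1)) \<and>
      (b < t \<longrightarrow> sgn (X t - X (pred_pt f t)) = \<delta> \<and> sg f (pred_pt f t) t = (if odd n then e0 else - e0))" for n
  proof (induction n)
    case 0
    show ?case
    proof (intro ballI impI)
      fix t assume t: "t \<in> ?A" "b \<le> t \<and> t \<le> c \<and> l t = 0"
      have "t = b"
      proof (rule ccontr)
        assume "t \<noteq> b"
        then have "b \<in> {s \<in> ?A. b \<le> s \<and> s < t}" using t bA by auto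
        moreover have "finite {s \<in> ?A. b \<le> s \<and> s < t}" using fin by auto
        ultimately have "l t > 0" unfolding l_def by (metis card_gt_0_iff empty_iff)
        then show False using t by simp
      qed
      then show "(even 0 \<longrightarrow> gr t = gr b) \<and>
      (odd (0::nat) \<longrightarrow> gr t = (if \<delta> = e0 then gr b - 1 else gr b + 1)) \<and>
      (b < t \<longrightarrow> sgn (X t - X (pred_pt f t)) = \<delta> \<and> sg f (pred_pt f t) t = (if odd (0::nat) then e0 else - e0))"
        by simp
    qed
  next
    case (Suc n)
    show ?case
    proof (intro ballI impI)
      fix t assume t: "t \<in> ?A" "b \<le> t \<and> t \<le> c \<and> l t = Suc n"
      have bt: "b < t" using t lb by (cases "t = b") auto
      define p where "p = pred_pt f t"
      have cp: "consec f p t" "b \<le> p" using pred_props[OF fin t(1) bA bt] p_def by auto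
      have pA: "p \<in> ?A" "p < t" using cp unfolding consec_def by auto
      have setEq: "{s \<in> ?A. b \<le> s \<and> s < t} = insert p {s \<in> ?A. b \<le> s \<and> s < p}"
      proof
        show "{s \<in> ?A. b \<le> s \<and> s < t} \<subseteq> insert p {s \<in> ?A. b \<le> s \<and> s < p}"
        proof
          fix s assume s: "s \<in> {s \<in> ?A. b \<le> s \<and> s < t}"
          then have "\<not> (p < s \<and> s < t)" using cp(1) unfolding consec_def by auto
          then show "s \<in> insert p {s \<in> ?A. b \<le> s \<and> s < p}" using s by auto
        qed
      qed (use pA cp in auto)
      have "l t = Suc (l p)" unfolding l_def setEq
        by (rule card_insert_disjoint) (use fin in auto)
      then have lp: "l p = n" using t by simp
      have IH: "(even n \<longrightarrow> gr p = gr b) \<and>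
        (odd n \<longrightarrow> gr p = (if \<delta> = e0 then gr b - 1 else gr b + 1)) \<and>
        (b < p \<longrightarrow> sgn (X p - X (pred_pt f p)) = \<delta> \<and> sg f (pred_pt f p) p = (if odd n then e0 else - e0))"
        using Suc.IH pA cp t lp by auto
      have step: "(sgn (X t - X p) = sg f p t \<longrightarrow> gr t = gr p - 1) \<and>
         (sgn (X t - X p) = - sg f p t \<longrightarrow> gr t = gr p + 1)"
        using bigon_step[OF cont inj cp(1) H] unfolding X_def .
      have sgpt: "sg f p t = 1 \<or> sg f p t = -1" using sign_arc[OF cont cp(1)] by auto
      have Xtp: "sgn (X t - X p) = 1 \<or> sgn (X t - X p) = -1"
        using X_distinct[OF inj t(1) pA(1)] pA(2) sgn_pm1 unfolding X_def by auto
      show "(even (Suc n) \<longrightarrow> gr t = gr b) \<and>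
        (odd (Suc n) \<longrightarrow> gr t = (if \<delta> = e0 then gr b - 1 else gr b + 1)) \<and>
        (b < t \<longrightarrow> sgn (X t - X (pred_pt f t)) = \<delta> \<and> sg f (pred_pt f t) t = (if odd (Suc n) then e0 else - e0))"
      proof (cases "p = b")
        case True
        then have n0: "n = 0" using lp lb by simp
        have "succ_pt f b = t" using consec_pred_succ[OF fin] cp(1) True by auto
        then have tb1: "t = b1" using b1_def by simp
        have d: "sgn (X t - X p) = \<delta>" "sg f p t = e0" using True tb1 \<delta>_def e0_def by auto
        show ?thesis using step d n0 \<delta>1 e0 True p_def by auto
      next
        case False
        then have bp: "b < p" using cp by simp
        have ntp: "\<not> turning f p" using nt pA bp t by auto
        define pp where "pp = pred_pt f p"
        have cpp: "consec f pp p" using pred_props[OF fin pA(1) bA bp] pp_def by auto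
        have ppA: "pp \<in> ?A" "pp < p" using cpp unfolding consec_def by auto
        have sp: "succ_pt f p = t" using consec_pred_succ[OF fin cp(1)] by simp
        have "\<not> ((X pp < X p \<and> X t < X p) \<or> (X p < X pp \<and> X p < X t))"
          using ntp pA bA bp t sp unfolding turning_def Let_def X_def pp_def by auto
        moreover have "X pp \<noteq> X p" "X t \<noteq> X p"
          using X_distinct[OF inj ppA(1) pA(1)] X_distinct[OF inj t(1) pA(1)] ppA pA
          unfolding X_def by auto
        ultimately have sgeq: "sgn (X t - X p) = sgn (X p - X pp)"
          by (auto simp: sgn_real_def)
        obtain D where D: "D \<noteq> 0" "((\<lambda>r. snd (f r)) has_real_derivative D) (at p)"
          using der pA by blast
        have alt: "sg f pp p = - sg f p t" by (rule alternation[OF cont D(2) D(1) cpp cp(1)])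
        have d: "sgn (X t - X p) = \<delta>" "sg f p t = (if odd n then - e0 else e0)"
          using IH bp sgeq alt pp_def by auto
        show ?thesis using step d IH bp \<delta>1 e0 p_def by (cases "odd n") auto
      qed
    qed
  qed
  have exs: "\<exists>s\<in>?A. s < b" using tb unfolding turning_def by auto
  then obtain s0 where s0: "s0 \<in> ?A" "s0 < b" by blast
  define a where "a = pred_pt f b"
  have ca: "consec f a b" using pred_props[OF fin bA s0] a_def by auto
  have aA: "a \<in> ?A" "a < b" using ca unfolding consec_def by auto
  have A1: "sg f a b = 1 \<or> sg f a b = -1" "\<And>u. a < u \<Longrightarrow> u < b \<Longrightarrow> sg f a b * snd (f u) > 0"
    using sign_arc[OF cont ca] by auto
  obtain D where D: "D \<noteq> 0" "((\<lambda>r. snd (f r)) has_real_derivative D) (at b)"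
    using der bA by blast
  have alt: "sg f a b = - e0" unfolding e0_def by (rule alternation[OF cont D(2) D(1) ca cb1(1)])
  have "(X a < X b \<and> X b1 < X b) \<or> (X b < X a \<and> X b < X b1)"
    using tb unfolding turning_def Let_def X_def a_def b1_def by auto
  then have sab: "sgn (X a - X b) = \<delta>" unfolding \<delta>_def by (auto simp: sgn_real_def)
  have Xab: "X a \<noteq> X b" using X_distinct[OF inj aA(1) bA] aA unfolding X_def by auto
  have pos: "\<delta> = - e0" if "positive_turning f b"
  proof -
    have "is_bigon f b a" using that unfolding positive_turning_def a_def by simp
    then have ev: "\<forall>\<^sub>F u in at b within open_segment a b. sgn (X a - X b) * snd (f u) > 0"
      unfolding is_bigon_def Let_def X_def by (simp add: open_segment_commute)
    have "sgn (X a - X b) = sg f a b"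
      by (rule corner[OF ca ev A1(1) A1(2)]) (use Xab sgn_pm1 in auto)
    then show ?thesis using sab alt by simp
  qed
  have neg: "\<delta> = e0" if "negative_turning f b"
  proof -
    have "is_bigon f a b" using that unfolding negative_turning_def a_def by simp
    then have ev: "\<forall>\<^sub>F u in at b within open_segment a b. sgn (X b - X a) * snd (f u) > 0"
      unfolding is_bigon_def Let_def X_def by simp
    have "sgn (X b - X a) = sg f a b"
      by (rule corner[OF ca ev A1(1) A1(2)]) (use Xab sgn_pm1 in auto)
    moreover have "sgn (X b - X a) = - sgn (X a - X b)" by (simp add: sgn_minus[symmetric])
    ultimately show ?thesis using sab alt by simp
  qed
  show ?thesis
  proof (intro ballI impI)
    fix t assume t: "t \<in> ?A" "b \<le> t \<and> t \<le> c"
    have I: "(even (l t) \<longrightarrow> gr t = gr b) \<and>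
      (odd (l t) \<longrightarrow> gr t = (if \<delta> = e0 then gr b - 1 else gr b + 1))"
      using inv[of "l t"] t by auto
    show "let l = card {s \<in> ?A. b \<le> s \<and> s < t} in
      (even l \<longrightarrow> gr t = gr b) \<and>
      (odd l \<and> positive_turning f b \<longrightarrow> gr t = gr b + 1) \<and>
      (odd l \<and> negative_turning f b \<longrightarrow> gr t = gr b - 1)"
      using I pos neg e0 unfolding Let_def l_def by auto
  qed
qed

lemma periodic_int:
  fixes \<gamma> :: "real \<Rightarrow> real \<times> real"
  assumes per: "\<forall>t. \<gamma> (t + 1) = \<gamma> t + (of_int p, of_int q)"
  shows "\<gamma> (t + of_int k) = \<gamma> t + of_int k *\<^sub>R (of_int p, of_int q)"
proof -
  define P :: "real \<times> real" where "P = (of_int p, of_int q)"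
  have nat: "\<gamma> (x + of_nat n) = \<gamma> x + of_nat n *\<^sub>R P" for x n
  proof (induction n)
    case 0 then show ?case by simp
  next
    case (Suc n)
    have "x + of_nat (Suc n) = (x + of_nat n) + 1" by simp
    then have "\<gamma> (x + of_nat (Suc n)) = \<gamma> ((x + of_nat n) + 1)" by (rule arg_cong)
    also have "\<dots> = \<gamma> (x + of_nat n) + P" using per P_def by blast
    also have "\<dots> = \<gamma> x + (of_nat n *\<^sub>R P + P)" using Suc.IH by (simp add: add.assoc)
    also have "of_nat n *\<^sub>R P + P = of_nat (Suc n) *\<^sub>R P" by (simp add: scaleR_add_left)
    finally show ?case .
  qed
  show ?thesis
  proof (cases "k \<ge> 0")
    case True
    define n where "n = nat k"
    have "k = int n" using True n_def by simp
    then show ?thesis using nat[of t n] P_def by simp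
  next
    case False
    define n where "n = nat (- k)"
    have n: "k = - int n" using False n_def by simp
    have "\<gamma> ((t - of_nat n) + of_nat n) = \<gamma> (t - of_nat n) + of_nat n *\<^sub>R P"
      by (rule nat)
    then have "\<gamma> t = \<gamma> (t - of_nat n) + of_nat n *\<^sub>R P" by simp
    then have "\<gamma> (t - of_nat n) = \<gamma> t - of_nat n *\<^sub>R P" by (simp add: eq_diff_eq)
    then show ?thesis using n P_def by simp
  qed
qed

lemma diagram_facts:
  fixes \<gamma> :: "real \<Rightarrow> real \<times> real" and v :: "real \<times> real"
  assumes sd: "standard_diagram \<gamma> p q w z" and iv: "int_vec v"
  defines "f \<equiv> (\<lambda>r. \<gamma> r + v)"
  shows "continuous_on UNIV f" "inj f" "finite (alpha_pts f)"
    "\<And>t. t \<in> alpha_pts f \<Longrightarrow> \<exists>D. D \<noteq> 0 \<and> ((\<lambda>r. snd (f r)) has_real_derivative D) (at t)"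
proof -
  have C1: "\<gamma> C1_differentiable_on UNIV" and per: "\<forall>t. \<gamma> (t + 1) = \<gamma> t + (of_int p, of_int q)"
    and q: "q > 0" and iv2: "\<forall>s t. int_vec (\<gamma> s - \<gamma> t) \<longrightarrow> s - t \<in> \<int>"
    and tr: "\<forall>t. snd (\<gamma> t) \<in> \<int> \<longrightarrow> snd (vector_derivative \<gamma> (at t)) \<noteq> 0"
    using sd unfolding standard_diagram_def by auto
  have diff: "\<gamma> differentiable at x" for x using C1 by (simp add: C1_differentiable_on_eq)
  have contg: "continuous_on UNIV \<gamma>"
    using diff by (simp add: continuous_at_imp_continuous_on differentiable_imp_continuous_within)
  show contf: "continuous_on UNIV f" unfolding f_def by (intro continuous_intros contg)
  show "inj f"
  proof (rule injI)
    fix s t assume "f s = f t"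
    then have e: "\<gamma> s = \<gamma> t" unfolding f_def by simp
    then have "int_vec (\<gamma> s - \<gamma> t)" by (simp add: int_vec_def)
    then have "s - t \<in> \<int>" using iv2 by blast
    then obtain k where k: "s - t = of_int k" by (auto elim: Ints_cases)
    have "\<gamma> s = \<gamma> t + of_int k *\<^sub>R (of_int p, of_int q)"
      using periodic_int[OF per, of t k] k by (simp add: algebra_simps)
    then have "of_int k * (of_int q :: real) = 0" using e by (simp add: prod_eq_iff)
    then have "k = 0" using q by simp
    then show "s = t" using k by simp
  qed
  have vZ: "snd v \<in> \<int>" using iv by (simp add: int_vec_def)
  show der: "\<exists>D. D \<noteq> 0 \<and> ((\<lambda>r. snd (f r)) has_real_derivative D) (at t)" if t: "t \<in> alpha_pts f" for t
  proof -
    define V where "V = vector_derivative \<gamma> (at t)"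
    have "(\<gamma> has_vector_derivative V) (at t)" unfolding V_def using diff vector_derivative_works by blast
    then have "(\<gamma> has_derivative (\<lambda>x. x *\<^sub>R V)) (at t)" by (simp add: has_vector_derivative_def)
    then have "((\<lambda>r. snd (\<gamma> r)) has_derivative (\<lambda>x. snd (x *\<^sub>R V))) (at t)" by (rule has_derivative_snd)
    moreover have "(\<lambda>x. snd (x *\<^sub>R V)) = (*) (snd V)" by (auto simp: mult.commute)
    ultimately have "((\<lambda>r. snd (\<gamma> r)) has_derivative (*) (snd V)) (at t)"
      by simp
    then have "((\<lambda>r. snd (\<gamma> r)) has_real_derivative snd V) (at t)" by (simp add: has_field_derivative_def)
    then have d: "((\<lambda>r. snd (f r)) has_real_derivative snd V) (at t)"
      unfolding f_def using DERIV_add[OF _ DERIV_const, of "\<lambda>r. snd (\<gamma> r)" "snd V" t UNIV "snd v"] by simp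
    have "snd (\<gamma> t) + snd v = 0" using t unfolding alpha_pts_def f_def by simp
    then have "snd (\<gamma> t) = - snd v" by simp
    then have "snd (\<gamma> t) \<in> \<int>" using vZ by simp
    then have "snd V \<noteq> 0" using tr V_def by blast
    then show ?thesis using d by blast
  qed
  show "finite (alpha_pts f)"
  proof (rule ccontr)
    assume inf: "infinite (alpha_pts f)"
    have "compact ((\<lambda>r. snd (\<gamma> r)) ` {0..1})"
      by (intro compact_continuous_image continuous_intros continuous_on_subset[OF contg]) auto
    then obtain M where M: "\<And>r. r \<in> {0..1} \<Longrightarrow> \<bar>snd (\<gamma> r)\<bar> \<le> M"
      using compact_imp_bounded bounded_real by (metis image_eqI)
    have bnd: "\<bar>t\<bar> \<le> M + \<bar>snd v\<bar> + 1" if t: "t \<in> alpha_pts f" for t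
    proof -
      define k where "k = floor t"
      define r where "r = t - of_int k"
      have r: "r \<in> {0..1}" unfolding r_def k_def by (auto simp: floor_le_iff) linarith
      have "\<gamma> t = \<gamma> r + of_int k *\<^sub>R (of_int p, of_int q)"
        using periodic_int[OF per, of r k] unfolding r_def by simp
      then have "snd (\<gamma> t) = snd (\<gamma> r) + of_int k * of_int q" by simp
      moreover have "snd (\<gamma> t) + snd v = 0" using t unfolding alpha_pts_def f_def by simp
      ultimately have "\<bar>of_int k * of_int q\<bar> \<le> M + \<bar>snd v\<bar>" using M[OF r] by linarith
      moreover have "\<bar>(of_int k::real)\<bar> \<le> \<bar>of_int k * of_int q\<bar>"
      proof -
        have "(1::real) \<le> of_int q" using q by simp
        then have "\<bar>(of_int k::real)\<bar> * 1 \<le> \<bar>of_int k\<bar> * of_int q"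
          by (intro mult_left_mono) auto
        then show ?thesis using q by (simp add: abs_mult)
      qed
      ultimately have "\<bar>(of_int k::real)\<bar> \<le> M + \<bar>snd v\<bar>" by linarith
      moreover have "\<bar>t\<bar> \<le> \<bar>of_int k\<bar> + 1" using r unfolding r_def by auto
      ultimately show ?thesis by linarith
    qed
    have bd: "bounded (alpha_pts f)" unfolding bounded_iff using bnd by (auto simp: real_norm_def)
    obtain x where x: "x islimpt alpha_pts f"
      using bounded_infinite_imp_islimpt[OF subset_refl bd inf] by blast
    have cl: "closed (alpha_pts f)" unfolding alpha_pts_def
      by (intro closed_Collect_eq continuous_intros continuous_on_compose2[OF contf]) auto
    have xA: "x \<in> alpha_pts f" using x cl closed_limpt by blast
    obtain D where D: "D \<noteq> 0" "((\<lambda>r. snd (f r)) has_real_derivative D) (at x)" using der[OF xA] by blast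
    have x0: "snd (f x) = 0" using xA unfolding alpha_pts_def by simp
    obtain d where d: "d > 0" "\<And>h. h > 0 \<Longrightarrow> h < d \<Longrightarrow> snd (f (x + h)) \<noteq> 0 \<and> snd (f (x - h)) \<noteq> 0"
    proof (cases "D > 0")
      case True
      obtain d1 where d1: "d1 > 0" "\<And>h. h > 0 \<Longrightarrow> h < d1 \<Longrightarrow> snd (f x) < snd (f (x + h))"
        using DERIV_pos_inc_right[OF D(2) True] by blast
      obtain d2 where d2: "d2 > 0" "\<And>h. h > 0 \<Longrightarrow> h < d2 \<Longrightarrow> snd (f (x - h)) < snd (f x)"
        using DERIV_pos_inc_left[OF D(2) True] by blast
      show ?thesis using d1 d2 x0 by (intro that[of "min d1 d2"]) fastforce+
    next
      case False
      then have Dn: "D < 0" using D by simp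
      obtain d1 where d1: "d1 > 0" "\<And>h. h > 0 \<Longrightarrow> h < d1 \<Longrightarrow> snd (f (x + h)) < snd (f x)"
        using DERIV_neg_dec_right[OF D(2) Dn] by blast
      obtain d2 where d2: "d2 > 0" "\<And>h. h > 0 \<Longrightarrow> h < d2 \<Longrightarrow> snd (f x) < snd (f (x - h))"
        using DERIV_neg_dec_left[OF D(2) Dn] by blast
      show ?thesis using d1 d2 x0 by (intro that[of "min d1 d2"]) fastforce+
    qed
    obtain y where y: "y \<in> alpha_pts f" "y \<noteq> x" "dist y x < d"
      using x d(1) unfolding islimpt_approachable by blast
    show False
    proof (cases "y > x")
      case True
      then show False using d(2)[of "y - x"] y unfolding alpha_pts_def by (auto simp: dist_real_def)
    next
      case False
      then show False using d(2)[of "x - y"] y unfolding alpha_pts_def by (auto simp: dist_real_def)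
    qed
  qed
qed

theorem lemma3p7:
  fixes \<gamma> :: "real \<Rightarrow> real \<times> real" and p q :: int and w z v :: "real \<times> real"
    and gr :: "real \<Rightarrow> int" and b c :: real
  assumes "standard_diagram \<gamma> p q w z"
    and "int_vec v"
    and "\<forall>s t. is_bigon (\<lambda>r. \<gamma> r + v) s t \<longrightarrow> gr s = gr t + 1"
    and "turning (\<lambda>r. \<gamma> r + v) b" and "turning (\<lambda>r. \<gamma> r + v) c" and "b < c"
    and "\<forall>t\<in>alpha_pts (\<lambda>r. \<gamma> r + v). b < t \<and> t < c \<longrightarrow> \<not> turning (\<lambda>r. \<gamma> r + v) t"
  shows "\<forall>t\<in>alpha_pts (\<lambda>r. \<gamma> r + v). b \<le> t \<and> t \<le> c \<longrightarrow>
    (let l = card {s \<in> alpha_pts (\<lambda>r. \<gamma> r + v). b \<le> s \<and> s < t} in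
      (even l \<longrightarrow> gr t = gr b) \<and>
      (odd l \<and> positive_turning (\<lambda>r. \<gamma> r + v) b \<longrightarrow> gr t = gr b + 1) \<and>
      (odd l \<and> negative_turning (\<lambda>r. \<gamma> r + v) b \<longrightarrow> gr t = gr b - 1))"
  by (rule main_comb[OF diagram_facts[OF assms(1,2)] assms(3-7)])

end
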